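(* Let $R,r,I,\iota,L,G,P$ be real numbers with $R>0$, $0<r<R$, $I>0$, $0<\iota<I$, $\iota<r$, $L>0$, $G>0$, $P>0$ and $G+P-L>r-\iota$, and set $$a=G+P-r-L+\iota,\quad b=r-\iota+\tfrac{L}{2},\quad c=G+I-\iota+P,\quad d=\tfrac{L}{2}+\iota.$$ Let $M=\{(x,y)\in\mathbb{R}^2:0<x,y<1\}$, $\varphi(x,y)=xy(1-x)(1-y)$, $\omega=\frac{1}{\varphi}\mathrm{d}x\wedge\mathrm{d}y$, and $H:M\to\mathbb{R}$, $H(x,y)=c\ln(x)+d\ln(1-x)+a\ln(y)+b\ln(1-y)$. Then the solutions (in $M$) of the system $$\dot x=x(1-x)\big(a-(a+b)y\big),\qquad \dot y=y(1-y)\big(-c+(c+d)x\big)$$ are exactly the motions of the Hamiltonian system $(M,\omega,H)$.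
   Context: The Hamiltonian vector field $X_H$ is defined by $\omega(X_H,\cdot)=\mathrm{d}H$. A motion of the Hamiltonian system $(M,\omega,H)$ is a differentiable curve $\gamma$ in $M$ with $\frac{\mathrm{d}}{\mathrm{d}t}\gamma(t)|_{t=s}=X_H(\gamma(s))$ for all $s$. *)

theory Defs
  imports "HOL-Analysis.Analysis"
begin

definition phi :: "real \<times> real \<Rightarrow> real" where
  "phi p = fst p * snd p * (1 - fst p) * (1 - snd p)"

definition omega :: "real \<times> real \<Rightarrow> real \<times> real \<Rightarrow> real \<times> real \<Rightarrow> real" where
  "omega p u v = (fst u * snd v - snd u * fst v) / phi p"

definition hamiltonian_vf ::
  "('p::real_normed_vector \<Rightarrow> 'p \<Rightarrow> 'p \<Rightarrow> real) \<Rightarrow> ('p \<Rightarrow> real) \<Rightarrow> 'p \<Rightarrow> 'p" where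
  "hamiltonian_vf w H p = (THE X. (H has_derivative (\<lambda>v. w p X v)) (at p))"

definition is_motion ::
  "'p::real_normed_vector set \<Rightarrow> ('p \<Rightarrow> 'p \<Rightarrow> 'p \<Rightarrow> real) \<Rightarrow> ('p \<Rightarrow> real)
     \<Rightarrow> (real \<Rightarrow> 'p) \<Rightarrow> real set \<Rightarrow> bool" where
  "is_motion M w H \<gamma> T \<longleftrightarrow>
     (\<forall>s\<in>T. \<gamma> s \<in> M \<and> (\<gamma> has_vector_derivative hamiltonian_vf w H (\<gamma> s)) (at s))"

end

theory Submission
  imports Defs
begin

lemma H_deriv:
  fixes x y a b c d :: real assumes "0<x" "x<1" "0<y" "y<1"
  shows "((\<lambda>q. c * ln (fst q) + d * ln (1 - fst q) + a * ln (snd q) + b * ln (1 - snd q)) has_derivative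
    (\<lambda>v. (c/x - d/(1-x)) * fst v + (a/y - b/(1-y)) * snd v)) (at (x,y))"
proof -
  have n: "1 - x \<noteq> 0" "1 - y \<noteq> 0" using assms by auto
  show ?thesis using assms n
    by (auto intro!: derivative_eq_intros simp: fun_eq_iff divide_simps) (simp add: algebra_simps)
qed

lemma vf_unique:
  fixes p X :: "real \<times> real" and H :: "real \<times> real \<Rightarrow> real"
  assumes "phi p \<noteq> 0" "(H has_derivative (\<lambda>v. omega p X v)) (at p)"
  shows "hamiltonian_vf omega H p = X"
  unfolding hamiltonian_vf_def
proof (rule the_equality)
  show "(H has_derivative (\<lambda>v. omega p X v)) (at p)" by (rule assms(2))
  fix Y assume "(H has_derivative (\<lambda>v. omega p Y v)) (at p)"
  from has_derivative_unique[OF this assms(2)]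
  have e: "\<And>v. omega p Y v = omega p X v" by metis
  from e[of "(1,0)"] e[of "(0,1)"] assms(1) show "Y = X"
    by (cases X, cases Y) (auto simp: omega_def)
qed

lemma vf_formula:
  fixes x y a b c d :: real assumes "0<x" "x<1" "0<y" "y<1"
  shows "hamiltonian_vf omega (\<lambda>(x, y). c * ln x + d * ln (1 - x) + a * ln y + b * ln (1 - y)) (x,y)
    = (x * (1 - x) * (a - (a + b) * y), y * (1 - y) * (- c + (c + d) * x))"
proof (rule vf_unique)
  show "phi (x,y) \<noteq> 0" using assms by (simp add: phi_def)
  have eq: "(\<lambda>(x, y). c * ln x + d * ln (1 - x) + a * ln y + b * ln (1 - y)) =
    (\<lambda>q. c * ln (fst q) + d * ln (1 - fst q) + a * ln (snd q) + b * ln (1 - snd q))"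
    by (auto simp: fun_eq_iff)
  have f: "(\<lambda>v. (c/x - d/(1-x)) * fst v + (a/y - b/(1-y)) * snd v) =
     (\<lambda>v. omega (x,y) (x * (1 - x) * (a - (a + b) * y), y * (1 - y) * (- c + (c + d) * x)) v)"
    using assms by (auto simp: fun_eq_iff omega_def phi_def field_simps)
  show "((\<lambda>(x, y). c * ln x + d * ln (1 - x) + a * ln y + b * ln (1 - y)) has_derivative
     (\<lambda>v. omega (x,y) (x * (1 - x) * (a - (a + b) * y), y * (1 - y) * (- c + (c + d) * x)) v)) (at (x,y))"
    unfolding eq f[symmetric] using H_deriv[OF assms] .
qed

theorem mainTheorem6:
  fixes R r I iota L G P :: real
  assumes "R > 0" "0 < r" "r < R" "I > 0" "0 < iota" "iota < I" "iota < r"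
    "L > 0" "G > 0" "P > 0" "G + P - L > r - iota"
  defines "a \<equiv> G + P - r - L + iota"
      and "b \<equiv> r - iota + L / 2"
      and "c \<equiv> G + I - iota + P"
      and "d \<equiv> L / 2 + iota"
  defines "M \<equiv> {(x, y). 0 < x \<and> x < 1 \<and> 0 < y \<and> y < 1} :: (real \<times> real) set"
  defines "H \<equiv> (\<lambda>(x, y). c * ln x + d * ln (1 - x) + a * ln y + b * ln (1 - y))
              :: real \<times> real \<Rightarrow> real"
  shows "\<forall>(\<gamma> :: real \<Rightarrow> real \<times> real) T. open T \<longrightarrow> (\<forall>t\<in>T. \<gamma> t \<in> M) \<longrightarrow>
     ((\<forall>t\<in>T. (\<gamma> has_vector_derivative
          (fst (\<gamma> t) * (1 - fst (\<gamma> t)) * (a - (a + b) * snd (\<gamma> t)),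
           snd (\<gamma> t) * (1 - snd (\<gamma> t)) * (- c + (c + d) * fst (\<gamma> t)))) (at t))
      \<longleftrightarrow> is_motion M omega H \<gamma> T)"
proof (intro allI impI)
  fix \<gamma> :: "real \<Rightarrow> real \<times> real" and T :: "real set"
  assume inM: "\<forall>t\<in>T. \<gamma> t \<in> M"
  have vf: "hamiltonian_vf omega H (\<gamma> t) =
     (fst (\<gamma> t) * (1 - fst (\<gamma> t)) * (a - (a + b) * snd (\<gamma> t)),
      snd (\<gamma> t) * (1 - snd (\<gamma> t)) * (- c + (c + d) * fst (\<gamma> t)))" if "t \<in> T" for t
  proof -
    obtain x y where xy: "\<gamma> t = (x,y)" by fastforce
    with inM that have "0<x" "x<1" "0<y" "y<1" by (auto simp: M_def)
    then show ?thesis unfolding xy H_def by (simp add: vf_formula)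
  qed
  show "(\<forall>t\<in>T. (\<gamma> has_vector_derivative
          (fst (\<gamma> t) * (1 - fst (\<gamma> t)) * (a - (a + b) * snd (\<gamma> t)),
           snd (\<gamma> t) * (1 - snd (\<gamma> t)) * (- c + (c + d) * fst (\<gamma> t)))) (at t))
      \<longleftrightarrow> is_motion M omega H \<gamma> T"
    unfolding is_motion_def using inM vf by auto
qed

end
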